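(* Let $G$ be a convex compact visibility graph. Then every edge of $G$ is either a bridge of $G$ or lies in a triangle ($K_3$) of $G$.
   Context: All graphs are finite and simple. Given a family of pairwise disjoint nonempty connected subsets ("regions") of $\mathbb{R}^2$, a sightline is a closed line segment $\overline{ab}$ with $a\in A$, $b\in B$ for two different regions $A\neq B$ of the family, such that the segment intersects no region of the family other than $A$ and $B$. A graph $G$ is a visibility graph if there is a family of pairwise disjoint nonempty connected subsets of $\mathbb{R}^2$, one for each vertex of $G$ (a visibility representation), such that two distinct vertices are adjacent in $G$ if and only if there is a sightline between their regions. $G$ is a convex compact visibility graph if it has such a representation in which every region is compact and convex. A bridge is an edge whose removal increases the number of connected components. *)

theory Defs
  imports "HOL-Analysis.Analysis"
begin

definition simple_graph :: "'v set \<Rightarrow> ('v \<Rightarrow> 'v \<Rightarrow> bool) \<Rightarrow> bool" where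
  "simple_graph V E \<longleftrightarrow> finite V \<and> (\<forall>u v. E u v \<longrightarrow> u \<in> V \<and> v \<in> V)
     \<and> (\<forall>u v. E u v \<longrightarrow> E v u) \<and> (\<forall>v. \<not> E v v)"

definition sightline :: "'v set \<Rightarrow> ('v \<Rightarrow> (real^2) set) \<Rightarrow> 'v \<Rightarrow> 'v \<Rightarrow> real^2 \<Rightarrow> real^2 \<Rightarrow> bool" where
  "sightline V R u v a b \<longleftrightarrow> u \<in> V \<and> v \<in> V \<and> u \<noteq> v \<and> a \<in> R u \<and> b \<in> R v
     \<and> (\<forall>w\<in>V. w \<noteq> u \<and> w \<noteq> v \<longrightarrow> closed_segment a b \<inter> R w = {})"

definition visibility_rep :: "'v set \<Rightarrow> ('v \<Rightarrow> 'v \<Rightarrow> bool) \<Rightarrow> ('v \<Rightarrow> (real^2) set) \<Rightarrow> bool" where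
  "visibility_rep V E R \<longleftrightarrow>
     (\<forall>v\<in>V. R v \<noteq> {} \<and> connected (R v))
   \<and> (\<forall>u\<in>V. \<forall>v\<in>V. u \<noteq> v \<longrightarrow> R u \<inter> R v = {})
   \<and> (\<forall>u\<in>V. \<forall>v\<in>V. u \<noteq> v \<longrightarrow> (E u v \<longleftrightarrow> (\<exists>a b. sightline V R u v a b)))"

definition convex_compact_visibility_graph :: "'v set \<Rightarrow> ('v \<Rightarrow> 'v \<Rightarrow> bool) \<Rightarrow> bool" where
  "convex_compact_visibility_graph V E \<longleftrightarrow>
     (\<exists>R. visibility_rep V E R \<and> (\<forall>v\<in>V. compact (R v) \<and> convex (R v)))"

definition reach :: "'v set \<Rightarrow> ('v \<Rightarrow> 'v \<Rightarrow> bool) \<Rightarrow> ('v \<times> 'v) set" where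
  "reach V E = {(x, y). x \<in> V \<and> y \<in> V \<and> E x y}\<^sup>* \<inter> (V \<times> V)"

definition num_components :: "'v set \<Rightarrow> ('v \<Rightarrow> 'v \<Rightarrow> bool) \<Rightarrow> nat" where
  "num_components V E = card (V // reach V E)"

definition delete_edge :: "('v \<Rightarrow> 'v \<Rightarrow> bool) \<Rightarrow> 'v \<Rightarrow> 'v \<Rightarrow> ('v \<Rightarrow> 'v \<Rightarrow> bool)" where
  "delete_edge E u v = (\<lambda>x y. E x y \<and> {x, y} \<noteq> {u, v})"

definition is_bridge :: "'v set \<Rightarrow> ('v \<Rightarrow> 'v \<Rightarrow> bool) \<Rightarrow> 'v \<Rightarrow> 'v \<Rightarrow> bool" where
  "is_bridge V E u v \<longleftrightarrow> E u v \<and> num_components V (delete_edge E u v) > num_components V E"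

definition in_triangle :: "'v set \<Rightarrow> ('v \<Rightarrow> 'v \<Rightarrow> bool) \<Rightarrow> 'v \<Rightarrow> 'v \<Rightarrow> bool" where
  "in_triangle V E u v \<longleftrightarrow> E u v \<and> (\<exists>w\<in>V. E u w \<and> E v w)"

end

theory Submission
  imports Defs
begin

lemma betw:
  fixes p q z y :: "'a::euclidean_space"
  assumes "z \<in> closed_segment p q" "y \<in> closed_segment z q"
  shows "z \<in> closed_segment p y"
proof -
  have "closed_segment z q \<subseteq> closed_segment p q"
    using assms(1) by (simp add: closed_segment_subset)
  then have "y \<in> closed_segment p q" using assms(2) by auto
  then show ?thesis using assms between_swap[of p q z y]
    by (simp add: between_mem_segment)
qed

lemma seg_sub:
  fixes p q z :: "'a::euclidean_space"
  shows "z \<in> closed_segment p q \<Longrightarrow> closed_segment z q \<subseteq> closed_segment p q"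
  by (simp add: closed_segment_subset)

lemma dist_seg_eq:
  fixes z q y :: "'a::euclidean_space"
  assumes "y \<in> closed_segment z q" "dist z q \<le> dist y q"
  shows "y = z"
proof -
  obtain r where r: "0 \<le> r" "r \<le> 1" "y = (1 - r) *\<^sub>R z + r *\<^sub>R q"
    using assms(1) by (auto simp: in_segment)
  have "y - q = (1 - r) *\<^sub>R (z - q)" using r(3) by (simp add: algebra_simps)
  then have "dist y q = (1 - r) * dist z q" using r by (simp add: dist_norm)
  with assms(2) have "r * dist z q \<le> 0" by (simp add: algebra_simps)
  then have "r = 0 \<or> z = q" using r(1)
    by (metis dist_eq_0_iff dist_pos_lt linorder_not_le mult_pos_pos order_le_less)
  then show ?thesis using r by auto
qed

lemma compact_param:
  fixes f g :: "real \<Rightarrow> 'a::euclidean_space"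
  assumes "continuous_on {0..1} f" "continuous_on {0..1} g" "compact S"
  shows "compact {t \<in> {0..1}. closed_segment (f t) (g t) \<inter> S \<noteq> {}}"
proof -
  define h where "h = (\<lambda>z. (1 - snd z) *\<^sub>R f (fst z) + snd z *\<^sub>R g (fst z))"
  have cf: "continuous_on ({0..1} \<times> {0..1}) (\<lambda>z. f (fst z))"
    by (rule continuous_on_compose2[OF assms(1)]) (auto intro: continuous_intros)
  have cg: "continuous_on ({0..1} \<times> {0..1}) (\<lambda>z. g (fst z))"
    by (rule continuous_on_compose2[OF assms(2)]) (auto intro: continuous_intros)
  have ch: "continuous_on ({0..1} \<times> {0..1}) h"
    unfolding h_def by (intro continuous_intros cf cg)
  have cl: "closed (({0..1} \<times> {0..1}) \<inter> h -` S)"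
    by (rule continuous_closed_preimage[OF ch]) (auto intro: closed_Times compact_imp_closed assms(3))
  have co: "compact (({0..1::real} \<times> {0..1::real}) \<inter> h -` S)"
  proof -
    have "compact (({0..1::real} \<times> {0..1::real}) \<inter> (({0..1} \<times> {0..1}) \<inter> h -` S))"
      by (rule compact_Int_closed[OF _ cl]) (auto intro: compact_Times)
    then show ?thesis by (simp add: Int_assoc[symmetric])
  qed
  have eq: "{t \<in> {0..1}. closed_segment (f t) (g t) \<inter> S \<noteq> {}} = fst ` (({0..1} \<times> {0..1}) \<inter> h -` S)"
    by (force simp: h_def in_segment image_iff)
  show ?thesis unfolding eq
    by (rule compact_continuous_image[OF _ co]) (intro continuous_intros)
qed

lemma infdist_comb:
  fixes a b c :: "'a::euclidean_space"
  assumes "a \<in> S" "b \<in> S" "convex S" "closed S" "S \<noteq> {}"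
    "0 \<le> \<alpha>" "0 \<le> \<beta>" "0 \<le> \<gamma>" "\<alpha> + \<beta> + \<gamma> = 1"
  shows "infdist (\<alpha> *\<^sub>R a + \<beta> *\<^sub>R b + \<gamma> *\<^sub>R c) S \<le> \<gamma> * infdist c S"
proof -
  obtain m where m: "m \<in> S" "infdist c S = dist c m"
    using infdist_attains_inf[OF assms(4,5)] by blast
  have "\<alpha> *\<^sub>R a + \<beta> *\<^sub>R b + \<gamma> *\<^sub>R m \<in> convex hull {a,b,m}"
    using assms(6-9) by (auto simp: convex_hull_3)
  moreover have "convex hull {a,b,m} \<subseteq> S"
    using assms(1-3) m(1) by (simp add: hull_minimal)
  ultimately have mem: "\<alpha> *\<^sub>R a + \<beta> *\<^sub>R b + \<gamma> *\<^sub>R m \<in> S" by auto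
  have "infdist (\<alpha> *\<^sub>R a + \<beta> *\<^sub>R b + \<gamma> *\<^sub>R c) S \<le> dist (\<alpha> *\<^sub>R a + \<beta> *\<^sub>R b + \<gamma> *\<^sub>R c) (\<alpha> *\<^sub>R a + \<beta> *\<^sub>R b + \<gamma> *\<^sub>R m)"
    by (rule infdist_le[OF mem])
  also have "\<dots> = norm (\<gamma> *\<^sub>R (c - m))"
    by (simp add: dist_norm algebra_simps)
  also have "\<dots> = \<gamma> * dist c m" using assms(8) by (simp add: dist_norm)
  finally show ?thesis using m by simp
qed

lemma cevian:
  fixes x a b \<alpha> \<beta> :: "'a::real_vector"
  assumes "\<alpha> \<in> closed_segment x b" "\<alpha> \<noteq> x" "\<alpha> \<noteq> b"
    "\<beta> \<in> closed_segment x a" "\<beta> \<noteq> x" "\<beta> \<noteq> a"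
  shows "closed_segment \<alpha> a \<inter> closed_segment b \<beta> \<noteq> {}"
proof -
  obtain s1 where s1: "0 \<le> s1" "s1 \<le> 1" "\<alpha> = (1 - s1) *\<^sub>R x + s1 *\<^sub>R b"
    using assms(1) by (auto simp: in_segment)
  obtain s3 where s3: "0 \<le> s3" "s3 \<le> 1" "\<beta> = (1 - s3) *\<^sub>R x + s3 *\<^sub>R a"
    using assms(4) by (auto simp: in_segment)
  have "s1 \<noteq> 0" using s1 assms(2) by auto
  moreover have "s1 \<noteq> 1" using s1 assms(3) by auto
  ultimately have s1': "0 < s1" "s1 < 1" using s1 by auto
  have "s3 \<noteq> 0" using s3 assms(5) by auto
  moreover have "s3 \<noteq> 1" using s3 assms(6) by auto
  ultimately have s3': "0 < s3" "s3 < 1" using s3 by auto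
  have le1: "s1 * s3 \<le> s1" using s1' s3' mult_left_mono[of s3 1 s1] by simp
  then have den: "0 < 1 - s1 * s3" using s1' by linarith
  define l where "l = (1 - s1) * s3 / (1 - s1 * s3)"
  define m where "m = (1 - s1) / (1 - s1 * s3)"
  have "(1 - s1) * s3 \<le> 1 - s1 * s3" using s3' by (simp add: algebra_simps)
  then have l: "0 \<le> l" "l \<le> 1" using s1' s3' den unfolding l_def
    by (auto simp: divide_le_eq_1_pos)
  have "1 - s1 \<le> 1 - s1 * s3" using le1 by simp
  then have m: "0 \<le> m" "m \<le> 1" using s1' s3' den unfolding m_def
    by (auto simp: divide_le_eq_1_pos)
  have eq: "(1 - l) *\<^sub>R \<alpha> + l *\<^sub>R a = (1 - m) *\<^sub>R b + m *\<^sub>R \<beta>"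
  proof -
    have e1: "(1 - l) *\<^sub>R \<alpha> + l *\<^sub>R a
        = ((1 - l) * (1 - s1)) *\<^sub>R x + ((1 - l) * s1) *\<^sub>R b + l *\<^sub>R a"
      by (simp add: s1(3) algebra_simps)
    have e2: "(1 - m) *\<^sub>R b + m *\<^sub>R \<beta> = (m * (1 - s3)) *\<^sub>R x + (1 - m) *\<^sub>R b + (m * s3) *\<^sub>R a"
      by (simp add: s3(3) algebra_simps)
    have c1: "(1 - l) * (1 - s1) = m * (1 - s3)"
      using den unfolding l_def m_def by (simp add: field_simps)
    have c2: "(1 - l) * s1 = 1 - m"
      using den unfolding l_def m_def by (simp add: field_simps) (simp add: algebra_simps)?
    have c3: "l = m * s3"
      using den unfolding l_def m_def by (simp add: field_simps)
    show ?thesis unfolding e1 e2 unfolding c1 c2 unfolding c3 ..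
  qed
  have "(1 - l) *\<^sub>R \<alpha> + l *\<^sub>R a \<in> closed_segment \<alpha> a" using l by (auto simp: in_segment)
  moreover have "(1 - m) *\<^sub>R b + m *\<^sub>R \<beta> \<in> closed_segment b \<beta>" using m by (auto simp: in_segment)
  ultimately show ?thesis using eq by auto
qed


definition det2 :: "real^2 \<Rightarrow> real^2 \<Rightarrow> real" where
  "det2 x y = x$1 * y$2 - x$2 * y$1"
lemma det2_add1[simp]: "det2 (x + y) z = det2 x z + det2 y z" by (simp add: det2_def algebra_simps)
lemma det2_add2[simp]: "det2 z (x + y) = det2 z x + det2 z y" by (simp add: det2_def algebra_simps)
lemma det2_diff1[simp]: "det2 (x - y) z = det2 x z - det2 y z" by (simp add: det2_def algebra_simps)
lemma det2_diff2[simp]: "det2 z (x - y) = det2 z x - det2 z y" by (simp add: det2_def algebra_simps)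
lemma det2_scale1[simp]: "det2 (c *\<^sub>R x) z = c * det2 x z" by (simp add: det2_def algebra_simps)
lemma det2_scale2[simp]: "det2 z (c *\<^sub>R x) = c * det2 z x" by (simp add: det2_def algebra_simps)
lemma det2_self[simp]: "det2 x x = 0" by (simp add: det2_def)
lemma det2_swap: "det2 x y = - det2 y x" by (simp add: det2_def)
lemma det2_zero_dep:
  assumes "det2 x y = 0" "x \<noteq> 0"
  shows "\<exists>k. y = k *\<^sub>R x"
proof -
  have ex: "x$1 \<noteq> 0 \<or> x$2 \<noteq> 0" using assms(2) by (metis (mono_tags, lifting) exhaust_2 vec_eq_iff zero_index)
  show ?thesis
  proof (cases "x$1 \<noteq> 0")
    case True
    let ?k = "y$1 / x$1"
    have "y = ?k *\<^sub>R x" using True assms(1)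
      unfolding vec_eq_iff forall_2 by (auto simp: det2_def field_simps)
    then show ?thesis by blast
  next
    case False
    then have "x$2 \<noteq> 0" using ex by auto
    let ?k = "y$2 / x$2"
    have "y = ?k *\<^sub>R x" using False \<open>x$2 \<noteq> 0\<close> assms(1)
      unfolding vec_eq_iff forall_2 by (auto simp: det2_def field_simps)
    then show ?thesis by blast
  qed
qed

lemma det_seg_contra:
  assumes c: "c \<in> convex hull {a,b,c0}" and nd: "det2 (a - c0) (b - c0) \<noteq> 0"
    and bs: "b \<in> closed_segment a c"
  shows "b = c"
proof -
  obtain \<alpha> \<beta> \<gamma> where abc: "0 \<le> \<alpha>" "0 \<le> \<beta>" "0 \<le> \<gamma>" "\<alpha> + \<beta> + \<gamma> = 1"
    "c = \<alpha> *\<^sub>R a + \<beta> *\<^sub>R b + \<gamma> *\<^sub>R c0"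
    using c by (auto simp: convex_hull_3)
  obtain s where s: "0 \<le> s" "s \<le> 1" "b = (1 - s) *\<^sub>R a + s *\<^sub>R c"
    using bs by (auto simp: in_segment)
  have e1: "b - c0 = (1 - s) *\<^sub>R (a - c0) + s *\<^sub>R (c - c0)"
    using s(3) by (simp add: algebra_simps)
  have g: "\<gamma> = 1 - \<alpha> - \<beta>" using abc(4) by simp
  have e2: "c - c0 = \<alpha> *\<^sub>R (a - c0) + \<beta> *\<^sub>R (b - c0)"
    using abc(5) unfolding g by (simp add: algebra_simps)
  have aux: "\<And>A B C. B = (1 - s) *\<^sub>R A + s *\<^sub>R C \<Longrightarrow> C = \<alpha> *\<^sub>R A + \<beta> *\<^sub>R B
      \<Longrightarrow> det2 A B = s * \<beta> * det2 A B"
  proof -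
    fix A B C :: "real^2"
    assume h1: "B = (1 - s) *\<^sub>R A + s *\<^sub>R C" and h2: "C = \<alpha> *\<^sub>R A + \<beta> *\<^sub>R B"
    have "det2 A B = det2 A ((1 - s) *\<^sub>R A + s *\<^sub>R C)" using h1 by simp
    also have "\<dots> = s * det2 A C" by (simp only: det2_add2 det2_scale2 det2_self) simp?
    also have "\<dots> = s * \<beta> * det2 A B" unfolding h2 by (simp only: det2_add2 det2_scale2 det2_self) simp?
    finally show "det2 A B = s * \<beta> * det2 A B" .
  qed
  have "det2 (a - c0) (b - c0) = s * \<beta> * det2 (a - c0) (b - c0)"
    by (rule aux[OF e1 e2])
  then have "s * \<beta> = 1" using nd
    by (metis mult_cancel_right1)
  moreover have "\<beta> \<le> 1" using abc by linarith
  ultimately have "s * \<beta> \<le> s" using s(1) mult_left_mono[of \<beta> 1 s] by simp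
  then have "s = 1" using \<open>s * \<beta> = 1\<close> s(2) by linarith
  then show ?thesis using s(3) by simp
qed

locale vis =
  fixes V :: "'v set" and E :: "'v \<Rightarrow> 'v \<Rightarrow> bool" and R :: "'v \<Rightarrow> (real^2) set"
  assumes sg: "simple_graph V E"
    and rep: "visibility_rep V E R"
    and cc: "\<forall>v\<in>V. compact (R v) \<and> convex (R v)"
begin

definition Oth :: "'v \<Rightarrow> 'v \<Rightarrow> (real^2) set" where
  "Oth u v = \<Union> (R ` (V - {u,v}))"

lemma E_sym: "E x y \<Longrightarrow> E y x" using sg by (auto simp: simple_graph_def)
lemma E_V: "E x y \<Longrightarrow> x \<in> V \<and> y \<in> V" using sg by (auto simp: simple_graph_def)
lemma E_irr: "\<not> E x x" using sg by (auto simp: simple_graph_def)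
lemma finV: "finite V" using sg by (auto simp: simple_graph_def)
lemma disj: "x \<in> V \<Longrightarrow> y \<in> V \<Longrightarrow> x \<noteq> y \<Longrightarrow> R x \<inter> R y = {}"
  using rep by (auto simp: visibility_rep_def)
lemma nonempty: "x \<in> V \<Longrightarrow> R x \<noteq> {}"
  using rep by (auto simp: visibility_rep_def)
lemma cpt: "x \<in> V \<Longrightarrow> compact (R x)" using cc by auto
lemma cvx: "x \<in> V \<Longrightarrow> convex (R x)" using cc by auto

lemma sight_E:
  assumes "u \<in> V" "w \<in> V" "u \<noteq> w" "a \<in> R u" "c \<in> R w"
    "\<forall>w'\<in>V. w' \<noteq> u \<and> w' \<noteq> w \<longrightarrow> closed_segment a c \<inter> R w' = {}"
  shows "E u w"
proof -
  have "sightline V R u w a c" using assms by (auto simp: sightline_def)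
  then show ?thesis using rep assms(1-3) by (auto simp: visibility_rep_def)
qed

lemma E_sight:
  assumes "E u v"
  obtains a b where "a \<in> R u" "b \<in> R v" "\<forall>w\<in>V. w \<noteq> u \<and> w \<noteq> v \<longrightarrow> closed_segment a b \<inter> R w = {}"
proof -
  have "u \<in> V" "v \<in> V" "u \<noteq> v" using assms E_V E_irr by auto
  then obtain a b where "sightline V R u v a b" using rep assms by (auto simp: visibility_rep_def)
  then show ?thesis using that by (auto simp: sightline_def)
qed

lemma Oth_iff: "z \<in> Oth u v \<longleftrightarrow> (\<exists>w\<in>V. w \<noteq> u \<and> w \<noteq> v \<and> z \<in> R w)"
  by (auto simp: Oth_def)

lemma compact_Oth: "compact (Oth u v)"
  unfolding Oth_def using finV cc by (intro compact_UN) auto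

lemma tri_lemma:
  assumes uv: "u \<in> V" "v \<in> V" "u \<noteq> v" and a: "a \<in> R u" and b: "b \<in> R v"
    and c0: "c0 \<in> Oth u v"
    and clr: "closed_segment a b \<inter> Oth u v = {}"
    and hA: "\<forall>z\<in>convex hull {a,b,c0}. z \<in> R u \<longrightarrow> z = a"
    and hB: "\<forall>z\<in>convex hull {a,b,c0}. z \<in> R v \<longrightarrow> z = b"
    and nd: "det2 (a - c0) (b - c0) \<noteq> 0"
  shows "\<exists>w\<in>V. w \<noteq> u \<and> w \<noteq> v \<and> E u w \<and> E v w"
proof -
  define T0 where "T0 = convex hull {a,b,c0}"
  define S where "S = closed_segment a b"
  have cT0: "compact T0" unfolding T0_def by (rule finite_imp_compact_convex_hull) auto
  define K where "K = Oth u v \<inter> T0"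
  have cK: "compact K" unfolding K_def using compact_Oth cT0 by (rule compact_Int)
  have c0K: "c0 \<in> K" unfolding K_def T0_def using c0 by (simp add: hull_inc)
  have "continuous_on K (\<lambda>z. infdist z S)" by (intro continuous_intros)
  then obtain c where cK': "c \<in> K" and cmin: "\<forall>y\<in>K. infdist c S \<le> infdist y S"
    using continuous_attains_inf[OF cK] c0K by blast
  have cO: "c \<in> Oth u v" and cT: "c \<in> T0" using cK' by (auto simp: K_def)
  then obtain w where w: "w \<in> V" "w \<noteq> u" "w \<noteq> v" "c \<in> R w" by (auto simp: Oth_iff)
  have "c \<notin> S" using clr cO by (auto simp: S_def)
  then have fpos: "infdist c S > 0"
    by (intro infdist_pos_not_in_closed) (auto simp: S_def)
  have sub: "convex hull {a,b,c} \<subseteq> T0"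
    unfolding T0_def using cT[unfolded T0_def]
    by (intro hull_minimal) (auto simp: hull_inc)
  have key: "y = c" if y: "y \<in> convex hull {a,b,c}" "y \<in> Oth u v" for y
  proof -
    obtain \<alpha> \<beta> \<gamma> where abc: "0 \<le> \<alpha>" "0 \<le> \<beta>" "0 \<le> \<gamma>" "\<alpha> + \<beta> + \<gamma> = 1"
      "y = \<alpha> *\<^sub>R a + \<beta> *\<^sub>R b + \<gamma> *\<^sub>R c"
      using y(1) by (auto simp: convex_hull_3)
    have "y \<in> K" using y sub by (auto simp: K_def)
    then have "infdist c S \<le> infdist y S" using cmin by auto
    also have "\<dots> \<le> \<gamma> * infdist c S" unfolding abc(5) S_def
      by (rule infdist_comb) (use abc in auto)
    finally have "1 * infdist c S \<le> \<gamma> * infdist c S" by simp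
    then have "1 \<le> \<gamma>" using fpos by (simp only: mult_le_cancel_right)
    then have "\<alpha> = 0" "\<beta> = 0" "\<gamma> = 1" using abc(1-4) by auto
    then show ?thesis using abc(5) by simp
  qed
  have ndb: "det2 (b - c0) (a - c0) \<noteq> 0" using nd det2_swap[of "b - c0" "a - c0"] by auto
  have Euw: "E u w"
  proof (rule sight_E[OF uv(1) w(1) w(2)[symmetric] a w(4)], intro ballI impI)
    fix w' assume w': "w' \<in> V" "w' \<noteq> u \<and> w' \<noteq> w"
    show "closed_segment a c \<inter> R w' = {}"
    proof (rule ccontr)
      assume "closed_segment a c \<inter> R w' \<noteq> {}"
      then obtain z where z: "z \<in> closed_segment a c" "z \<in> R w'" by auto
      have zh: "z \<in> convex hull {a,b,c}" using z(1) unfolding segment_convex_hull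
        by (rule subsetD[OF hull_mono, rotated]) auto
      show False
      proof (cases "w' = v")
        case True
        then have "z = b" using hB zh sub z(2) by (auto simp: T0_def)
        then have "b = c" using det_seg_contra[OF cT[unfolded T0_def] nd] z(1) by simp
        then show False using disj[OF uv(2) w(1)] w b by auto
      next
        case False
        then have "z \<in> Oth u v" using w' z(2) by (auto simp: Oth_iff)
        then have "z = c" using key zh by auto
        then show False using disj[OF w'(1) w(1)] w' w z by auto
      qed
    qed
  qed
  have Evw: "E v w"
  proof (rule sight_E[OF uv(2) w(1) w(3)[symmetric] b w(4)], intro ballI impI)
    fix w' assume w': "w' \<in> V" "w' \<noteq> v \<and> w' \<noteq> w"
    show "closed_segment b c \<inter> R w' = {}"
    proof (rule ccontr)
      assume "closed_segment b c \<inter> R w' \<noteq> {}"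
      then obtain z where z: "z \<in> closed_segment b c" "z \<in> R w'" by auto
      have zh: "z \<in> convex hull {a,b,c}" using z(1) unfolding segment_convex_hull
        by (rule subsetD[OF hull_mono, rotated]) auto
      show False
      proof (cases "w' = u")
        case True
        then have "z = a" using hA zh sub z(2) by (auto simp: T0_def)
        moreover have "c \<in> convex hull {b,a,c0}" using cT by (simp add: T0_def insert_commute)
        ultimately have "a = c" using det_seg_contra[OF _ ndb] z(1) by simp
        then show False using disj[OF uv(1) w(1)] w a by auto
      next
        case False
        then have "z \<in> Oth u v" using w' z(2) by (auto simp: Oth_iff)
        then have "z = c" using key zh by auto
        then show False using disj[OF w'(1) w(1)] w' w z by auto
      qed
    qed
  qed
  show ?thesis using w Euw Evw by blast
qed

end

context vis begin

lemma Oth_commute: "Oth u v = Oth v u" by (auto simp: Oth_def insert_commute)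

lemma fan:
  assumes uv: "u \<in> V" "v \<in> V" "u \<noteq> v" and p: "p \<in> R u" "p' \<in> R u" and q: "q \<in> R v"
    and clr: "closed_segment p q \<inter> Oth u v = {}"
    and blk: "closed_segment p' q \<inter> Oth u v \<noteq> {}"
  shows "\<exists>w\<in>V. w \<noteq> u \<and> w \<noteq> v \<and> E u w \<and> E v w"
proof -
  define P where "P = (\<lambda>l::real. (1 - l) *\<^sub>R p + l *\<^sub>R p')"
  define Lam where "Lam = {l \<in> {0..1}. closed_segment (P l) q \<inter> Oth u v \<noteq> {}}"
  have cL: "compact Lam" unfolding Lam_def
    by (rule compact_param) (auto simp: P_def intro!: continuous_intros compact_Oth)
  have "1 \<in> Lam" using blk by (simp add: Lam_def P_def)
  then obtain l1 where l1: "l1 \<in> Lam" "\<forall>l\<in>Lam. l1 \<le> l"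
    using compact_attains_inf[OF cL] by blast
  have l1r: "0 \<le> l1" "l1 \<le> 1" using l1 by (auto simp: Lam_def)
  have "l1 \<noteq> 0" using l1(1) clr by (auto simp: Lam_def P_def)
  then have l1pos: "0 < l1" using l1r by auto
  have Pu: "P l \<in> R u" if "0 \<le> l" "l \<le> 1" for l
  proof -
    have "P l \<in> closed_segment p p'" using that by (auto simp: P_def in_segment)
    then show ?thesis using closed_segment_subset[OF p cvx[OF uv(1)]] by auto
  qed
  define Z where "Z = closed_segment (P l1) q \<inter> Oth u v"
  have cZ: "compact Z" unfolding Z_def by (intro compact_Int compact_Oth) simp
  have "Z \<noteq> {}" using l1(1) by (simp add: Z_def Lam_def)
  moreover have "continuous_on Z (\<lambda>y. dist y q)" by (intro continuous_intros)
  ultimately obtain z where z: "z \<in> Z" "\<forall>y\<in>Z. dist z q \<le> dist y q"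
    using continuous_attains_inf[OF cZ] by blast
  have zO: "z \<in> Oth u v" and zs: "z \<in> closed_segment (P l1) q" using z(1) by (auto simp: Z_def)
  then obtain w where w: "w \<in> V" "w \<noteq> u" "w \<noteq> v" "z \<in> R w" by (auto simp: Oth_iff)
  have znu: "z \<notin> R u" using disj[OF uv(1) w(1)] w by auto
  have znv: "z \<notin> R v" using disj[OF uv(2) w(1)] w by auto
  obtain \<sigma> where \<sigma>: "0 \<le> \<sigma>" "\<sigma> \<le> 1" "z = (1 - \<sigma>) *\<^sub>R P l1 + \<sigma> *\<^sub>R q"
    using zs by (auto simp: in_segment)
  have Ewv: "E w v"
  proof (rule sight_E[OF w(1) uv(2) w(3) w(4) q], intro ballI impI)
    fix w' assume w': "w' \<in> V" "w' \<noteq> w \<and> w' \<noteq> v"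
    show "closed_segment z q \<inter> R w' = {}"
    proof (rule ccontr)
      assume "closed_segment z q \<inter> R w' \<noteq> {}"
      then obtain y where y: "y \<in> closed_segment z q" "y \<in> R w'" by auto
      show False
      proof (cases "w' = u")
        case True
        have "z \<in> closed_segment (P l1) y" by (rule betw[OF zs y(1)])
        moreover have "closed_segment (P l1) y \<subseteq> R u"
          using True y(2) Pu[OF l1r] cvx[OF uv(1)] by (simp add: closed_segment_subset)
        ultimately show False using znu by auto
      next
        case False
        then have yO: "y \<in> Oth u v" using w' y(2) by (auto simp: Oth_iff)
        have "y \<in> closed_segment (P l1) q" using seg_sub[OF zs] y(1) by auto
        then have "y \<in> Z" using yO by (simp add: Z_def)
        then have "dist z q \<le> dist y q" using z(2) by auto
        then have "y = z" by (rule dist_seg_eq[OF y(1)])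
        then show False using disj[OF w'(1) w(1)] w' w(4) y(2) by auto
      qed
    qed
  qed
  define M where "M = {l \<in> {0..1}. closed_segment z (P l) \<inter> R v \<noteq> {}}"
  have cM: "compact M" unfolding M_def
    by (rule compact_param) (auto simp: P_def intro!: continuous_intros cpt[OF uv(2)])
  have l1M: "l1 \<notin> M"
  proof
    assume "l1 \<in> M"
    then obtain y where y: "y \<in> closed_segment z (P l1)" "y \<in> R v" by (auto simp: M_def)
    have "z \<in> closed_segment q (P l1)" using zs by (simp add: closed_segment_commute)
    then have "z \<in> closed_segment q y" by (rule betw[OF _ y(1)])
    moreover have "closed_segment q y \<subseteq> R v"
      using q y(2) cvx[OF uv(2)] by (simp add: closed_segment_subset)
    ultimately show False using znv by auto
  qed
  have "open (- M)" using cM by (simp add: compact_imp_closed open_Compl)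
  then obtain e where e: "e > 0" "ball l1 e \<subseteq> - M"
    using l1M by (meson ComplI open_contains_ball)
  define l where "l = max 0 (l1 - e / 2)"
  have lr: "0 \<le> l" "l < l1" "l \<le> 1" using l1pos e(1) l1r by (auto simp: l_def)
  have "dist l l1 < e" using e(1) l1pos by (auto simp: l_def dist_real_def)
  then have "l \<notin> M" using e(2) by (auto simp: dist_commute)
  then have clv: "closed_segment z (P l) \<inter> R v = {}" using lr by (auto simp: M_def)
  have Ewu: "E w u"
  proof (rule sight_E[OF w(1) uv(1) w(2) w(4) Pu[of l]], (use lr in auto)[2], intro ballI impI)
    fix w' assume w': "w' \<in> V" "w' \<noteq> w \<and> w' \<noteq> u"
    show "closed_segment z (P l) \<inter> R w' = {}"
    proof (cases "w' = v")
      case True then show ?thesis using clv by simp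
    next
      case False
      show ?thesis
      proof (rule ccontr)
        assume "closed_segment z (P l) \<inter> R w' \<noteq> {}"
        then obtain y where y: "y \<in> closed_segment z (P l)" "y \<in> R w'" by auto
        have yO: "y \<in> Oth u v" using w' y(2) False by (auto simp: Oth_iff)
        have "y \<noteq> z" using disj[OF w'(1) w(1)] w' w(4) y(2) by auto
        obtain r where r: "0 \<le> r" "r \<le> 1" "y = (1 - r) *\<^sub>R z + r *\<^sub>R P l"
          using y(1) by (auto simp: in_segment)
        have rpos: "0 < r" using r \<open>y \<noteq> z\<close> by (cases "r = 0") auto
        define \<tau> where "\<tau> = (1 - r) * \<sigma>"
        define mm where "mm = (1 - r) * (1 - \<sigma>) * l1 + r * l"
        have t1: "\<tau> \<le> 1 - r" unfolding \<tau>_def using r \<sigma> mult_left_mono[of \<sigma> 1 "1 - r"] by simp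
        have t0: "0 \<le> \<tau>" unfolding \<tau>_def using r \<sigma> by simp
        have den: "0 < 1 - \<tau>" using t1 rpos by linarith
        define mu where "mu = mm / (1 - \<tau>)"
        have onemt: "1 - \<tau> = (1 - r) * (1 - \<sigma>) + r" unfolding \<tau>_def by (simp add: algebra_simps)
        have mm0: "0 \<le> mm" unfolding mm_def using r \<sigma> l1r lr by (intro add_nonneg_nonneg mult_nonneg_nonneg) auto
        have "mm < l1 * (1 - \<tau>)"
          unfolding mm_def onemt using rpos lr by (simp add: algebra_simps)
        then have mul: "mu < l1" using den unfolding mu_def by (simp add: divide_less_eq)
        have mu0: "0 \<le> mu" using mm0 den unfolding mu_def by simp
        have muP: "(1 - \<tau>) *\<^sub>R P mu = (1 - \<tau> - mm) *\<^sub>R p + mm *\<^sub>R p'"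
        proof -
          have "(1 - \<tau>) * mu = mm" using den unfolding mu_def by simp
          moreover have "(1 - \<tau>) * (1 - mu) = 1 - \<tau> - mm"
            using \<open>(1 - \<tau>) * mu = mm\<close> by (simp add: algebra_simps)
          moreover have "(1 - \<tau>) *\<^sub>R P mu = ((1 - \<tau>) * (1 - mu)) *\<^sub>R p + ((1 - \<tau>) * mu) *\<^sub>R p'"
            unfolding P_def by (simp add: scaleR_add_right)
          ultimately show ?thesis by simp
        qed
        have yeq: "y = (1 - \<tau>) *\<^sub>R P mu + \<tau> *\<^sub>R q"
          unfolding muP r(3) \<sigma>(3) unfolding P_def mm_def \<tau>_def
          by (simp add: algebra_simps)
        have "y \<in> closed_segment (P mu) q" using yeq t0 den by (auto simp: in_segment)
        then have "mu \<in> Lam" using yO mu0 mul l1r by (auto simp: Lam_def)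
        then show False using l1(2) mul by auto
      qed
    qed
  qed
  show ?thesis using w Ewu Ewv E_sym by blast
qed

lemma all_clear:
  assumes "E u v" and notri: "\<not> (\<exists>w\<in>V. w \<noteq> u \<and> w \<noteq> v \<and> E u w \<and> E v w)"
    and a: "a \<in> R u" and b: "b \<in> R v"
  shows "closed_segment a b \<inter> Oth u v = {}"
proof -
  have uv: "u \<in> V" "v \<in> V" "u \<noteq> v" using assms(1) E_V E_irr by auto
  obtain a0 b0 where ab0: "a0 \<in> R u" "b0 \<in> R v"
    "\<forall>w\<in>V. w \<noteq> u \<and> w \<noteq> v \<longrightarrow> closed_segment a0 b0 \<inter> R w = {}"
    using E_sight[OF assms(1)] by blast
  have c0: "closed_segment a0 b0 \<inter> Oth u v = {}" unfolding Oth_def using ab0(3) by blast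
  have c1: "closed_segment a b0 \<inter> Oth u v = {}"
    using fan[OF uv ab0(1) a ab0(2) c0] notri by blast
  have c1': "closed_segment b0 a \<inter> Oth v u = {}"
    using c1 by (simp add: closed_segment_commute Oth_commute)
  have notri': "\<not> (\<exists>w\<in>V. w \<noteq> v \<and> w \<noteq> u \<and> E v w \<and> E u w)" using notri by blast
  have "closed_segment b a \<inter> Oth v u = {}"
    using fan[OF uv(2) uv(1) uv(3)[symmetric] ab0(2) b a c1'] notri' by blast
  then show ?thesis by (simp add: closed_segment_commute Oth_commute)
qed

end

lemma compact_tri: "compact {z::real\<times>real. 0 \<le> fst z \<and> 0 \<le> snd z \<and> fst z + snd z \<le> 1}"
proof -
  have cl: "closed {z::real\<times>real. 0 \<le> fst z \<and> 0 \<le> snd z \<and> fst z + snd z \<le> 1}"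
    by (intro closed_Collect_conj closed_Collect_le continuous_intros)
  have "{z::real\<times>real. 0 \<le> fst z \<and> 0 \<le> snd z \<and> fst z + snd z \<le> 1} =
        ({0..1} \<times> {0..1}) \<inter> {z::real\<times>real. 0 \<le> fst z \<and> 0 \<le> snd z \<and> fst z + snd z \<le> 1}"
    by auto
  also have "compact \<dots>" by (rule compact_Int_closed[OF _ cl]) (auto intro: compact_Times)
  finally show ?thesis .
qed

lemma construct:
  fixes x p q a :: "real^2" and P Q :: "(real^2) set"
  assumes cQ: "compact Q" and xQ: "x \<notin> Q" and xP: "x \<notin> P" and q: "q \<in> Q"
    and nd: "det2 (p - x) (q - x) \<noteq> 0"
    and tP: "0 \<le> tP" "tP < 1"
    and maxP: "\<forall>t. tP < t \<and> t \<le> 1 \<longrightarrow> closed_segment x ((1 - t) *\<^sub>R p + t *\<^sub>R q) \<inter> P = {}"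
    and a: "a \<in> P" "a = x + la *\<^sub>R (((1 - tP) *\<^sub>R p + tP *\<^sub>R q) - x)" "0 < la" "la \<le> 1"
    and near: "\<forall>z\<in>closed_segment x a. z \<in> P \<longrightarrow> z = a"
    and clr: "closed_segment x a \<inter> Q = {}"
  shows "\<exists>b\<in>Q. (\<forall>y\<in>convex hull {a,b,x}. y \<in> P \<longrightarrow> y = a) \<and>
    (\<forall>y\<in>convex hull {a,b,x}. y \<in> Q \<longrightarrow> y = b) \<and> det2 (a - x) (b - x) \<noteq> 0"
proof -
  define dp where "dp = p - x"
  define dq where "dq = q - x"
  define da where "da = a - x"
  have da_eq: "da = (la * (1 - tP)) *\<^sub>R dp + (la * tP) *\<^sub>R dq"
    unfolding da_def dp_def dq_def using a(2) by (simp add: algebra_simps)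
  define D where "D = {z::real\<times>real. 0 \<le> fst z \<and> 0 \<le> snd z \<and> fst z + snd z \<le> 1}"
  define g where "g = (\<lambda>z::real\<times>real. x + fst z *\<^sub>R da + snd z *\<^sub>R dq)"
  define PB where "PB = D \<inter> g -` Q"
  have cD: "compact D" unfolding D_def by (rule compact_tri)
  have cg: "continuous_on D g" unfolding g_def by (intro continuous_intros)
  have clPB: "closed PB" unfolding PB_def
    by (rule continuous_closed_preimage[OF cg compact_imp_closed[OF cD] compact_imp_closed[OF cQ]])
  have cPB: "compact PB"
  proof -
    have "compact (D \<inter> PB)" by (rule compact_Int_closed[OF cD clPB])
    moreover have "D \<inter> PB = PB" by (auto simp: PB_def)
    ultimately show ?thesis by simp
  qed
  have g01: "g (0,1) = q" by (simp add: g_def dq_def)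
  have "(0,1) \<in> PB" unfolding PB_def D_def using g01 q by simp
  have nz: "fst z + snd z \<noteq> 0" if "z \<in> PB" for z
  proof
    assume h: "fst z + snd z = 0"
    have "fst z = 0" "snd z = 0" using that h by (auto simp: PB_def D_def)
    then have "g z = x" by (simp add: g_def)
    then show False using that xQ by (auto simp: PB_def)
  qed
  define h where "h = (\<lambda>z::real\<times>real. snd z / (fst z + snd z))"
  have ch: "continuous_on PB h" unfolding h_def using nz by (intro continuous_intros) auto
  obtain z0 where z0: "z0 \<in> PB" "\<forall>z\<in>PB. h z0 \<le> h z"
    using continuous_attains_inf[OF cPB _ ch] \<open>(0,1) \<in> PB\<close> by blast
  define \<alpha>0 where "\<alpha>0 = fst z0"
  define \<beta>0 where "\<beta>0 = snd z0"
  have ab0: "0 \<le> \<alpha>0" "0 \<le> \<beta>0" "\<alpha>0 + \<beta>0 \<le> 1" using z0(1) by (auto simp: PB_def D_def \<alpha>0_def \<beta>0_def)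
  have gz0: "g z0 \<in> Q" using z0(1) by (auto simp: PB_def)
  have b0pos: "0 < \<beta>0"
  proof (rule ccontr)
    assume "\<not> 0 < \<beta>0"
    then have "\<beta>0 = 0" using ab0 by auto
    then have "g z0 = (1 - \<alpha>0) *\<^sub>R x + \<alpha>0 *\<^sub>R a"
      by (simp add: g_def \<alpha>0_def \<beta>0_def da_def algebra_simps)
    moreover have "\<alpha>0 \<le> 1" using ab0 \<open>\<beta>0 = 0\<close> by simp
    ultimately have "g z0 \<in> closed_segment x a" using ab0 by (auto simp: in_segment)
    then show False using gz0 clr by auto
  qed
  define b' where "b' = g z0"
  define TT where "TT = {\<tau> \<in> {0..1::real}. x + \<tau> *\<^sub>R (b' - x) \<in> Q}"
  have cTT: "compact TT"
  proof -
    have "closed ({0..1::real} \<inter> (\<lambda>\<tau>. x + \<tau> *\<^sub>R (b' - x)) -` Q)"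
      by (rule continuous_closed_preimage) (auto intro!: continuous_intros compact_imp_closed cQ)
    then have "compact ({0..1::real} \<inter> ({0..1::real} \<inter> (\<lambda>\<tau>. x + \<tau> *\<^sub>R (b' - x)) -` Q))"
      by (intro compact_Int_closed) auto
    moreover have "{0..1::real} \<inter> ({0..1::real} \<inter> (\<lambda>\<tau>. x + \<tau> *\<^sub>R (b' - x)) -` Q) = TT"
      by (auto simp: TT_def)
    ultimately show ?thesis by simp
  qed
  have "1 \<in> TT" using gz0 by (simp add: TT_def b'_def)
  then obtain \<tau>0 where \<tau>0: "\<tau>0 \<in> TT" "\<forall>t\<in>TT. \<tau>0 \<le> t"
    using compact_attains_inf[OF cTT] by blast
  have t0r: "0 \<le> \<tau>0" "\<tau>0 \<le> 1" using \<tau>0 by (auto simp: TT_def)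
  have "\<tau>0 \<noteq> 0" using \<tau>0(1) xQ by (auto simp: TT_def)
  then have t0pos: "0 < \<tau>0" using t0r by auto
  define b where "b = x + \<tau>0 *\<^sub>R (b' - x)"
  have bQ: "b \<in> Q" using \<tau>0(1) by (simp add: TT_def b_def)
  define db where "db = b - x"
  have db_eq: "db = (\<tau>0 * \<alpha>0) *\<^sub>R da + (\<tau>0 * \<beta>0) *\<^sub>R dq"
    unfolding db_def b_def b'_def g_def \<alpha>0_def \<beta>0_def by (simp add: algebra_simps)
  have sumle: "\<tau>0 * (\<alpha>0 + \<beta>0) \<le> 1"
    using t0r ab0 by (metis add_nonneg_nonneg mult_le_one)
  have hull_rep: "\<exists>\<kappa> \<rho>. 0 \<le> \<kappa> \<and> 0 \<le> \<rho> \<and> \<kappa> + \<rho> \<le> 1 \<and> y - x = \<kappa> *\<^sub>R da + \<rho> *\<^sub>R db"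
    if yh: "y \<in> convex hull {a,b,x}" for y
  proof -
    obtain \<kappa> \<rho> \<nu> where k: "0 \<le> \<kappa>" "0 \<le> \<rho>" "0 \<le> \<nu>" "\<kappa> + \<rho> + \<nu> = 1"
      "y = \<kappa> *\<^sub>R a + \<rho> *\<^sub>R b + \<nu> *\<^sub>R x"
      using yh by (auto simp: convex_hull_3)
    have nu: "\<nu> = 1 - \<kappa> - \<rho>" using k(4) by simp
    have "y - x = \<kappa> *\<^sub>R da + \<rho> *\<^sub>R db"
      unfolding k(5) nu da_def db_def by (simp add: algebra_simps)
    then show ?thesis using k by (intro exI[of _ \<kappa>] exI[of _ \<rho>]) auto
  qed
  have partQ: "y = b" if y: "y \<in> convex hull {a,b,x}" "y \<in> Q" for y
  proof -
    obtain \<kappa> \<rho> where k: "0 \<le> \<kappa>" "0 \<le> \<rho>" "\<kappa> + \<rho> \<le> 1" "y - x = \<kappa> *\<^sub>R da + \<rho> *\<^sub>R db"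
      using hull_rep[OF y(1)] by blast
    define z where "z = (\<kappa> + \<rho> * \<tau>0 * \<alpha>0, \<rho> * \<tau>0 * \<beta>0)"
    have gz: "g z = y"
    proof -
      have "y - x = (\<kappa> + \<rho> * \<tau>0 * \<alpha>0) *\<^sub>R da + (\<rho> * \<tau>0 * \<beta>0) *\<^sub>R dq"
        unfolding k(4) db_eq by (simp add: algebra_simps)
      then show ?thesis unfolding g_def z_def by (simp add: algebra_simps)
    qed
    have "\<rho> * (\<tau>0 * (\<alpha>0 + \<beta>0)) \<le> \<rho>" using sumle k(2) mult_left_mono[of _ 1 \<rho>] by simp
    then have "z \<in> D" unfolding D_def z_def using k t0r ab0 by (simp add: algebra_simps)
    then have zPB: "z \<in> PB" using gz y(2) by (simp add: PB_def)
    then have "h z0 \<le> h z" using z0(2) by auto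
    moreover have pos1: "0 < \<alpha>0 + \<beta>0" using ab0 b0pos by simp
    moreover have pos2: "0 < \<kappa> + \<rho> * \<tau>0 * \<alpha>0 + \<rho> * \<tau>0 * \<beta>0"
    proof -
      have "fst z + snd z \<noteq> 0" by (rule nz[OF zPB])
      moreover have "0 \<le> fst z + snd z" using \<open>z \<in> D\<close> by (auto simp: D_def)
      ultimately show ?thesis by (simp add: z_def)
    qed
    ultimately have "\<beta>0 / (\<alpha>0 + \<beta>0) \<le> (\<rho> * \<tau>0 * \<beta>0) / (\<kappa> + \<rho> * \<tau>0 * \<alpha>0 + \<rho> * \<tau>0 * \<beta>0)"
      by (simp add: h_def z_def \<alpha>0_def \<beta>0_def)
    then have "\<beta>0 * (\<kappa> + \<rho> * \<tau>0 * \<alpha>0 + \<rho> * \<tau>0 * \<beta>0) \<le> (\<rho> * \<tau>0 * \<beta>0) * (\<alpha>0 + \<beta>0)"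
      using pos1 pos2 by (simp add: divide_le_eq le_divide_eq)
    then have "\<beta>0 * \<kappa> \<le> 0" by (simp add: algebra_simps)
    then have k0: "\<kappa> = 0" using b0pos k(1) by (simp add: mult_le_0_iff)
    have "x + (\<rho> * \<tau>0) *\<^sub>R (b' - x) = y"
      using k(4) unfolding k0 db_def b_def by (simp add: algebra_simps)
    moreover have "\<rho> * \<tau>0 \<le> 1" using k(3) k0 t0r k(2) by (simp add: mult_le_one)
    ultimately have "\<rho> * \<tau>0 \<in> TT" using y(2) k(2) t0r by (auto simp: TT_def)
    then have "\<tau>0 \<le> \<rho> * \<tau>0" using \<tau>0(2) by auto
    then have "1 \<le> \<rho>" using t0pos by (simp add: mult_le_cancel_right1)
    then have "\<rho> = 1" using k(3) k(1) by simp
    then show ?thesis using k(4) k0 unfolding db_def by simp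
  qed
  have partP: "y = a" if y: "y \<in> convex hull {a,b,x}" "y \<in> P" for y
  proof -
    obtain \<kappa> \<rho> where k: "0 \<le> \<kappa>" "0 \<le> \<rho>" "\<kappa> + \<rho> \<le> 1" "y - x = \<kappa> *\<^sub>R da + \<rho> *\<^sub>R db"
      using hull_rep[OF y(1)] by blast
    have r0: "\<rho> = 0"
    proof (rule ccontr)
      assume "\<rho> \<noteq> 0"
      then have rpos: "0 < \<rho>" using k(2) by simp
      define K where "K = \<kappa> + \<rho> * \<tau>0 * \<alpha>0"
      define B where "B = \<rho> * \<tau>0 * \<beta>0"
      have K0: "0 \<le> K" unfolding K_def using k t0r ab0 by simp
      have Bpos: "0 < B" unfolding B_def using rpos t0pos b0pos by simp
      have "\<rho> * (\<tau>0 * (\<alpha>0 + \<beta>0)) \<le> \<rho>" using sumle k(2) mult_left_mono[of _ 1 \<rho>] by simp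
      then have KB: "K + B \<le> 1" unfolding K_def B_def using k(3) by (simp add: algebra_simps)
      define L where "L = K * la + B"
      define \<sigma> where "\<sigma> = (K * la * tP + B) / L"
      have "0 \<le> K * la" using K0 a(3) by simp
      then have Lpos: "0 < L" unfolding L_def using Bpos by linarith
      have "K * la \<le> K" using K0 a(4) mult_left_mono[of la 1 K] by simp
      then have L1: "L \<le> 1" using KB unfolding L_def by simp
      have "K * la * tP \<le> K * la" using K0 a(3) tP mult_left_mono[of tP 1 "K * la"] by simp
      then have s1: "\<sigma> \<le> 1" unfolding \<sigma>_def using Lpos by (simp add: L_def divide_le_eq_1_pos)
      have "tP * L < K * la * tP + B"
        unfolding L_def using Bpos tP by (simp add: algebra_simps)
      then have s0: "tP < \<sigma>" unfolding \<sigma>_def using Lpos by (simp add: less_divide_eq mult.commute)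
      have yx: "y - x = (K * la * (1 - tP)) *\<^sub>R dp + (K * la * tP + B) *\<^sub>R dq"
        unfolding k(4) db_eq da_eq K_def B_def by (simp add: algebra_simps)
      have Ls: "L * \<sigma> = K * la * tP + B" unfolding \<sigma>_def using Lpos by simp
      have L1s: "L * (1 - \<sigma>) = K * la * (1 - tP)" using Ls unfolding L_def by (simp add: algebra_simps)
      have e: "L *\<^sub>R ((1 - \<sigma>) *\<^sub>R dp + \<sigma> *\<^sub>R dq) = (L * (1 - \<sigma>)) *\<^sub>R dp + (L * \<sigma>) *\<^sub>R dq"
        by (simp add: scaleR_add_right)
      have "y - x = L *\<^sub>R ((1 - \<sigma>) *\<^sub>R dp + \<sigma> *\<^sub>R dq)"
        unfolding e L1s Ls yx ..
      then have "y = (1 - L) *\<^sub>R x + L *\<^sub>R ((1 - \<sigma>) *\<^sub>R p + \<sigma> *\<^sub>R q)"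
        unfolding dp_def dq_def by (simp add: algebra_simps)
      then have "y \<in> closed_segment x ((1 - \<sigma>) *\<^sub>R p + \<sigma> *\<^sub>R q)"
        using Lpos L1 unfolding in_segment by (intro exI[of _ L]) auto
      then show False using maxP s0 s1 y(2) by auto
    qed
    have "y = (1 - \<kappa>) *\<^sub>R x + \<kappa> *\<^sub>R a" using k(4) r0 unfolding da_def by (simp add: algebra_simps)
    then have "y \<in> closed_segment x a" using k(1) k(3) r0 by (auto simp: in_segment)
    then show ?thesis using near y(2) by auto
  qed
  have "det2 da dq = la * (1 - tP) * det2 dp dq" unfolding da_eq by simp
  then have "det2 da db = \<tau>0 * \<beta>0 * (la * (1 - tP) * det2 dp dq)" unfolding db_eq by simp
  moreover have "det2 dp dq \<noteq> 0" using nd by (simp add: dp_def dq_def)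
  ultimately have "det2 da db \<noteq> 0" using t0pos b0pos a(3) tP by simp
  then have "det2 (a - x) (b - x) \<noteq> 0" by (simp add: da_def db_def)
  then show ?thesis using bQ partP partQ by blast
qed


lemma nearest_pt:
  fixes x c :: "real^2" and A :: "(real^2) set"
  assumes "compact A" "closed_segment x c \<inter> A \<noteq> {}"
  obtains a where "a \<in> A" "a \<in> closed_segment x c" "\<forall>z\<in>closed_segment x a. z \<in> A \<longrightarrow> z = a"
proof -
  define S where "S = closed_segment x c \<inter> A"
  have cS: "compact S" unfolding S_def using assms(1) by (intro compact_Int) auto
  have "continuous_on S (\<lambda>y. dist y x)" by (intro continuous_intros)
  then obtain a where a: "a \<in> S" "\<forall>y\<in>S. dist a x \<le> dist y x"
    using continuous_attains_inf[OF cS] assms(2) by (auto simp: S_def)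
  have "\<forall>z\<in>closed_segment x a. z \<in> A \<longrightarrow> z = a"
  proof (intro ballI impI)
    fix z assume z: "z \<in> closed_segment x a" "z \<in> A"
    have "closed_segment x a \<subseteq> closed_segment x c"
      using a(1) by (intro closed_segment_subset) (auto simp: S_def)
    then have "z \<in> S" using z by (auto simp: S_def)
    then have "dist a x \<le> dist z x" using a(2) by auto
    moreover have "z \<in> closed_segment a x" using z(1) by (simp add: closed_segment_commute)
    ultimately show "z = a" by (rule dist_seg_eq[rotated])
  qed
  then show ?thesis using that a(1) by (auto simp: S_def)
qed

context vis begin

lemma shadow:
  assumes uv: "E u v" and notri: "\<not> (\<exists>w\<in>V. w \<noteq> u \<and> w \<noteq> v \<and> E u w \<and> E v w)"
    and x: "x \<in> Oth u v" and p: "p \<in> R u" and q: "q \<in> R v"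
    and xp: "closed_segment x p \<inter> R v = {}" and xq: "closed_segment x q \<inter> R u = {}"
  shows False
proof -
  have uV: "u \<in> V" and vV: "v \<in> V" and unv: "u \<noteq> v" using uv E_V E_irr by auto
  define A where "A = R u"
  define B where "B = R v"
  obtain wx where wx: "wx \<in> V" "wx \<noteq> u" "wx \<noteq> v" "x \<in> R wx" using x by (auto simp: Oth_iff)
  have xA: "x \<notin> A" using disj[OF uV wx(1)] wx by (auto simp: A_def)
  have xB: "x \<notin> B" using disj[OF vV wx(1)] wx by (auto simp: B_def)
  have AB: "A \<inter> B = {}" using disj[OF uV vV unv] by (simp add: A_def B_def)
  have cA: "compact A" "convex A" using cpt[OF uV] cvx[OF uV] by (auto simp: A_def)
  have cB: "compact B" "convex B" using cpt[OF vV] cvx[OF vV] by (auto simp: B_def)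
  have clear: "closed_segment a b \<inter> Oth u v = {}" if "a \<in> A" "b \<in> B" for a b
    using all_clear[OF uv notri] that by (auto simp: A_def B_def)
  have xpq: "x \<notin> closed_segment p q" using clear[OF p[folded A_def] q[folded B_def]] x by auto
  have nd: "det2 (p - x) (q - x) \<noteq> 0"
  proof
    assume d0: "det2 (p - x) (q - x) = 0"
    have "p - x \<noteq> 0" using p xA by (auto simp: A_def)
    then obtain k where k: "q - x = k *\<^sub>R (p - x)" using det2_zero_dep[OF d0] by blast
    consider "k \<le> 0" | "0 < k" "k \<le> 1" | "1 < k" by linarith
    then show False
    proof cases
      case 1
      define s where "s = 1 / (1 - k)"
      have s: "0 < s" "s \<le> 1" using 1 by (auto simp: s_def)
      have "s * (1 - k) = 1" using 1 by (simp add: s_def)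
      then have z: "1 - s + s * k = 0" by (simp add: algebra_simps)
      have "(1 - s) *\<^sub>R (p - x) + s *\<^sub>R (q - x) = (1 - s + s * k) *\<^sub>R (p - x)"
        unfolding k by (simp add: scaleR_add_left)
      then have "(1 - s) *\<^sub>R (p - x) + s *\<^sub>R (q - x) = 0" unfolding z by simp
      then have "(1 - s) *\<^sub>R p + s *\<^sub>R q = x" by (simp add: algebra_simps)
      then have "x \<in> closed_segment p q" using s unfolding in_segment by (intro exI[of _ s]) auto
      then show False using xpq by simp
    next
      case 2
      have "q = (1 - k) *\<^sub>R x + k *\<^sub>R p" using k by (simp add: algebra_simps)
      then have "q \<in> closed_segment x p" using 2 unfolding in_segment by (intro exI[of _ k]) auto
      then show False using xp q by auto
    next
      case 3
      have "p - x = (1 / k) *\<^sub>R (q - x)" using k 3 by simp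
      then have "p = (1 - 1 / k) *\<^sub>R x + (1 / k) *\<^sub>R q" by (simp add: algebra_simps)
      then have "p \<in> closed_segment x q" using 3 unfolding in_segment by (intro exI[of _ "1/k"]) auto
      then show False using xq p by auto
    qed
  qed
  define r where "r = (\<lambda>t::real. (1 - t) *\<^sub>R p + t *\<^sub>R q)"
  define SA where "SA = {t \<in> {0..1}. closed_segment x (r t) \<inter> A \<noteq> {}}"
  define SB where "SB = {t \<in> {0..1}. closed_segment x (r t) \<inter> B \<noteq> {}}"
  have cSA: "compact SA" unfolding SA_def r_def by (rule compact_param) (auto intro!: continuous_intros cA)
  have cSB: "compact SB" unfolding SB_def r_def by (rule compact_param) (auto intro!: continuous_intros cB)
  have "0 \<in> SA" using p by (auto simp: SA_def r_def A_def)
  then obtain tA where tA: "tA \<in> SA" "\<forall>t\<in>SA. t \<le> tA" using compact_attains_sup[OF cSA] by blast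
  have "1 \<in> SB" using q by (auto simp: SB_def r_def B_def)
  then obtain tB where tB: "tB \<in> SB" "\<forall>t\<in>SB. tB \<le> t" using compact_attains_inf[OF cSB] by blast
  have tAr: "0 \<le> tA" "tA < 1"
  proof -
    show "0 \<le> tA" using tA by (auto simp: SA_def)
    have "tA \<noteq> 1" using tA(1) xq by (auto simp: SA_def r_def A_def)
    then show "tA < 1" using tA by (auto simp: SA_def)
  qed
  have tBr: "0 < tB" "tB \<le> 1"
  proof -
    show "tB \<le> 1" using tB by (auto simp: SB_def)
    have "tB \<noteq> 0" using tB(1) xp by (auto simp: SB_def r_def B_def)
    then show "0 < tB" using tB by (auto simp: SB_def)
  qed
  have maxA: "\<forall>t. tA < t \<and> t \<le> 1 \<longrightarrow> closed_segment x ((1 - t) *\<^sub>R p + t *\<^sub>R q) \<inter> A = {}"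
  proof (intro allI impI)
    fix t assume "tA < t \<and> t \<le> 1"
    then have "t \<notin> SA" using tA(2) by force
    then show "closed_segment x ((1 - t) *\<^sub>R p + t *\<^sub>R q) \<inter> A = {}"
      using \<open>tA < t \<and> t \<le> 1\<close> tAr by (auto simp: SA_def r_def)
  qed
  have minB: "\<forall>t. 1 - tB < t \<and> t \<le> 1 \<longrightarrow> closed_segment x ((1 - t) *\<^sub>R q + t *\<^sub>R p) \<inter> B = {}"
  proof (intro allI impI)
    fix t assume t: "1 - tB < t \<and> t \<le> 1"
    then have "1 - t \<notin> SB" using tB(2) by force
    moreover have "r (1 - t) = (1 - t) *\<^sub>R q + t *\<^sub>R p" by (simp add: r_def)
    ultimately show "closed_segment x ((1 - t) *\<^sub>R q + t *\<^sub>R p) \<inter> B = {}"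
      using t tBr by (auto simp: SB_def)
  qed
  obtain a where a: "a \<in> A" "a \<in> closed_segment x (r tA)" "\<forall>z\<in>closed_segment x a. z \<in> A \<longrightarrow> z = a"
  proof -
    have ne: "closed_segment x (r tA) \<inter> A \<noteq> {}" using tA(1) by (simp add: SA_def)
    show ?thesis by (rule nearest_pt[OF cA(1) ne]) (rule that)
  qed
  obtain b where b: "b \<in> B" "b \<in> closed_segment x (r tB)" "\<forall>z\<in>closed_segment x b. z \<in> B \<longrightarrow> z = b"
  proof -
    have ne: "closed_segment x (r tB) \<inter> B \<noteq> {}" using tB(1) by (simp add: SB_def)
    show ?thesis by (rule nearest_pt[OF cB(1) ne]) (rule that)
  qed
  obtain la where la: "0 \<le> la" "la \<le> 1" "a = (1 - la) *\<^sub>R x + la *\<^sub>R r tA"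
    using a(2) by (auto simp: in_segment)
  obtain lb where lb: "0 \<le> lb" "lb \<le> 1" "b = (1 - lb) *\<^sub>R x + lb *\<^sub>R r tB"
    using b(2) by (auto simp: in_segment)
  have "la \<noteq> 0" using la a(1) xA by auto
  then have lapos: "0 < la" using la by simp
  have "lb \<noteq> 0" using lb b(1) xB by auto
  then have lbpos: "0 < lb" using lb by simp
  have a2: "a = x + la *\<^sub>R (((1 - tA) *\<^sub>R p + tA *\<^sub>R q) - x)"
    using la(3) by (simp add: r_def algebra_simps)
  have b2: "b = x + lb *\<^sub>R (((1 - (1 - tB)) *\<^sub>R q + (1 - tB) *\<^sub>R p) - x)"
    using lb(3) by (simp add: r_def algebra_simps)
  have notri': "\<not> (\<exists>w\<in>V. w \<noteq> v \<and> w \<noteq> u \<and> E v w \<and> E u w)" using notri by blast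
  show False
  proof (cases "closed_segment x a \<inter> B = {}")
    case True
    obtain b1 where b1: "b1 \<in> B" "\<forall>y\<in>convex hull {a,b1,x}. y \<in> A \<longrightarrow> y = a"
      "\<forall>y\<in>convex hull {a,b1,x}. y \<in> B \<longrightarrow> y = b1" "det2 (a - x) (b1 - x) \<noteq> 0"
      using construct[OF cB(1) xB xA q[folded B_def] nd tAr maxA a(1) a2 lapos la(2) a(3) True] by blast
    have "\<exists>w\<in>V. w \<noteq> u \<and> w \<noteq> v \<and> E u w \<and> E v w"
      by (rule tri_lemma[OF uV vV unv a(1)[unfolded A_def] b1(1)[unfolded B_def] x
            clear[OF a(1) b1(1)] b1(2)[unfolded A_def] b1(3)[unfolded B_def] b1(4)])
    then show False using notri by blast
  next
    case False
    note caseA = False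
    show False
    proof (cases "closed_segment x b \<inter> A = {}")
      case True
      have tBr': "0 \<le> 1 - tB" "1 - tB < 1" using tBr by auto
      have nd': "det2 (q - x) (p - x) \<noteq> 0" using nd det2_swap[of "q - x" "p - x"] by auto
      obtain a1 where a1: "a1 \<in> A" "\<forall>y\<in>convex hull {b,a1,x}. y \<in> B \<longrightarrow> y = b"
        "\<forall>y\<in>convex hull {b,a1,x}. y \<in> A \<longrightarrow> y = a1" "det2 (b - x) (a1 - x) \<noteq> 0"
        using construct[OF cA(1) xA xB p[folded A_def] nd' tBr' minB b(1) b2 lbpos lb(2) b(3) True]
        by blast
      have "closed_segment b a1 \<inter> Oth v u = {}"
        using clear[OF a1(1) b(1)] by (simp add: closed_segment_commute Oth_commute)
      then have "\<exists>w\<in>V. w \<noteq> v \<and> w \<noteq> u \<and> E v w \<and> E u w"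
        using tri_lemma[OF vV uV unv[symmetric] b(1)[unfolded B_def] a1(1)[unfolded A_def]
            x[unfolded Oth_commute[of u v]] _ a1(2)[unfolded B_def] a1(3)[unfolded A_def] a1(4)]
        by blast
      then show False using notri' by blast
    next
      case False
      obtain \<beta> where \<beta>: "\<beta> \<in> closed_segment x a" "\<beta> \<in> B" using caseA by auto
      obtain \<alpha> where \<alpha>: "\<alpha> \<in> closed_segment x b" "\<alpha> \<in> A" using False by auto
      have "closed_segment \<alpha> a \<inter> closed_segment b \<beta> \<noteq> {}"
        by (rule cevian[OF \<alpha>(1) _ _ \<beta>(1)]) (use \<alpha> \<beta> xA xB AB a(1) b(1) in auto)
      then obtain z where z: "z \<in> closed_segment \<alpha> a" "z \<in> closed_segment b \<beta>" by auto
      have "z \<in> A" using z(1) closed_segment_subset[OF \<alpha>(2) a(1) cA(2)] by auto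
      moreover have "z \<in> B" using z(2) closed_segment_subset[OF b(1) \<beta>(2) cB(2)] by auto
      ultimately show False using AB by auto
    qed
  qed
qed

end

lemma sep:
  fixes x y :: "real^2"
  assumes cA: "compact A" "A \<noteq> {}" and cB: "compact B" "B \<noteq> {}" and AB: "A \<inter> B = {}"
    and shA: "\<forall>q\<in>B. closed_segment x q \<inter> A \<noteq> {}"
    and shB: "\<forall>p\<in>A. closed_segment y p \<inter> B \<noteq> {}"
    and dA: "closed_segment x y \<inter> A = {}" and dB: "closed_segment x y \<inter> B = {}"
  shows False
proof -
  define S where "S = closed_segment x y"
  have cK: "compact (A \<union> B)" using cA cB by auto
  have "continuous_on (A \<union> B) (\<lambda>z. infdist z S)" by (intro continuous_intros)
  then obtain w where w: "w \<in> A \<union> B" "\<forall>z\<in>A \<union> B. infdist w S \<le> infdist z S"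
    using continuous_attains_inf[OF cK] cA(2) by blast
  have "w \<notin> S" using w(1) dA dB by (auto simp: S_def)
  then have fpos: "0 < infdist w S" by (intro infdist_pos_not_in_closed) (auto simp: S_def)
  have shrink: "infdist ((1 - s) *\<^sub>R e + s *\<^sub>R w) S \<le> s * infdist w S"
    if "e \<in> S" "0 \<le> s" "s \<le> 1" for e s
    using infdist_comb[of e S e "1 - s" 0 s w] that by (auto simp: S_def)
  show False
  proof (cases "w \<in> B")
    case True
    then obtain a' where a': "a' \<in> closed_segment x w" "a' \<in> A" using shA by blast
    obtain s where s: "0 \<le> s" "s \<le> 1" "a' = (1 - s) *\<^sub>R x + s *\<^sub>R w" using a'(1) by (auto simp: in_segment)
    have "s \<noteq> 1" using s(3) a'(2) True AB by auto
    then have "s < 1" using s by simp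
    have "infdist a' S \<le> s * infdist w S" unfolding s(3) by (rule shrink) (use s in \<open>auto simp: S_def\<close>)
    also have "\<dots> < infdist w S" using \<open>s < 1\<close> fpos by simp
    finally show False using w(2) a'(2) by force
  next
    case False
    then have wA: "w \<in> A" using w(1) by auto
    then obtain b' where b': "b' \<in> closed_segment y w" "b' \<in> B" using shB by blast
    obtain s where s: "0 \<le> s" "s \<le> 1" "b' = (1 - s) *\<^sub>R y + s *\<^sub>R w" using b'(1) by (auto simp: in_segment)
    have "s \<noteq> 1" using s(3) b'(2) wA AB by auto
    then have "s < 1" using s by simp
    have "infdist b' S \<le> s * infdist w S" unfolding s(3) by (rule shrink) (use s in \<open>auto simp: S_def\<close>)
    also have "\<dots> < infdist w S" using \<open>s < 1\<close> fpos by simp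
    finally show False using w(2) b'(2) by force
  qed
qed

lemma reach_equiv:
  assumes sym: "\<forall>x y. E x y \<longrightarrow> E y x"
  shows "equiv V (reach V E)"
proof -
  define r where "r = {(x, y). x \<in> V \<and> y \<in> V \<and> E x y}"
  have "sym r" using sym by (auto simp: r_def sym_def)
  then have s: "sym (r\<^sup>*)" by (rule sym_rtrancl)
  show ?thesis unfolding equiv_def reach_def r_def[symmetric]
  proof (intro conjI)
    show "refl_on V (r\<^sup>* \<inter> V \<times> V)" by (auto simp: refl_on_def)
    show "sym (r\<^sup>* \<inter> V \<times> V)" using s by (auto simp: sym_def)
    show "trans (r\<^sup>* \<inter> V \<times> V)" by (auto simp: trans_def intro: rtrancl_trans)
  qed auto
qed

lemma bridge_lemma:
  assumes sg: "simple_graph V E" and uv: "E u v" and S: "u \<in> S" "v \<notin> S"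
    and clo: "\<forall>x y. delete_edge E u v x y \<and> x \<in> S \<longrightarrow> y \<in> S"
  shows "is_bridge V E u v"
proof -
  define E' where "E' = delete_edge E u v"
  have symE: "\<forall>x y. E x y \<longrightarrow> E y x" using sg by (auto simp: simple_graph_def)
  have symE': "\<forall>x y. E' x y \<longrightarrow> E' y x" using symE by (auto simp: E'_def delete_edge_def insert_commute)
  have finV: "finite V" using sg by (auto simp: simple_graph_def)
  have uvV: "u \<in> V" "v \<in> V" using sg uv by (auto simp: simple_graph_def)
  define R1 where "R1 = reach V E"
  define R2 where "R2 = reach V E'"
  have eq1: "equiv V R1" unfolding R1_def by (rule reach_equiv[OF symE])
  have eq2: "equiv V R2" unfolding R2_def by (rule reach_equiv[OF symE'])
  have sub: "R2 \<subseteq> R1" unfolding R1_def R2_def reach_def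
    by (intro Int_mono rtrancl_mono) (auto simp: E'_def delete_edge_def)
  have uvR1: "(u, v) \<in> R1" unfolding R1_def reach_def using uv uvV by auto
  have stay: "y \<in> S" if "(x, y) \<in> {(x, y). x \<in> V \<and> y \<in> V \<and> E' x y}\<^sup>*" "x \<in> S" for x y
    using that by (induction rule: rtrancl_induct) (use clo in \<open>auto simp: E'_def\<close>)
  have uvR2: "(u, v) \<notin> R2" unfolding R2_def reach_def using stay S by auto
  define f where "f = (\<lambda>X. R1 `` X)"
  have fimg: "f (R2 `` {x}) = R1 `` {x}" if "x \<in> V" for x
  proof
    show "f (R2 `` {x}) \<subseteq> R1 `` {x}"
      using sub eq1 unfolding f_def equiv_def trans_def by blast
    have "(x, x) \<in> R2" using eq2 that unfolding equiv_def refl_on_def by auto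
    then show "R1 `` {x} \<subseteq> f (R2 `` {x})" unfolding f_def by auto
  qed
  have img: "f ` (V // R2) = V // R1"
  proof
    show "f ` (V // R2) \<subseteq> V // R1"
      by (auto elim!: quotientE simp: fimg intro!: quotientI)
    show "V // R1 \<subseteq> f ` (V // R2)"
    proof
      fix X assume "X \<in> V // R1"
      then obtain x where x: "X = R1 `` {x}" "x \<in> V" by (auto elim: quotientE)
      then have "X = f (R2 `` {x})" using fimg by simp
      moreover have "R2 `` {x} \<in> V // R2" using x(2) by (rule quotientI)
      ultimately show "X \<in> f ` (V // R2)" by blast
    qed
  qed
  have ninj: "\<not> inj_on f (V // R2)"
  proof
    assume inj: "inj_on f (V // R2)"
    have "f (R2 `` {u}) = f (R2 `` {v})"
      using fimg uvV eq1 uvR1 by (simp add: equiv_class_eq_iff)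
    then have "R2 `` {u} = R2 `` {v}"
      using inj uvV by (auto intro: quotientI dest: inj_onD)
    then have "(u, v) \<in> R2" using eq2 uvV by (simp add: equiv_class_eq_iff)
    then show False using uvR2 by simp
  qed
  have fin2: "finite (V // R2)"
    by (rule finite_quotient[OF finV]) (auto simp: R2_def reach_def)
  have "card (f ` (V // R2)) \<le> card (V // R2)" by (rule card_image_le[OF fin2])
  moreover have "card (f ` (V // R2)) \<noteq> card (V // R2)" using ninj inj_on_iff_eq_card[OF fin2, of f] by simp
  ultimately have "card (V // R1) < card (V // R2)" using img by simp
  then show ?thesis using uv unfolding is_bridge_def num_components_def R1_def R2_def E'_def by simp
qed


context vis begin

lemma main_bridge:
  assumes uv: "E u v" and notri: "\<not> (\<exists>w\<in>V. w \<noteq> u \<and> w \<noteq> v \<and> E u w \<and> E v w)"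
  shows "is_bridge V E u v"
proof -
  have uV: "u \<in> V" and vV: "v \<in> V" and unv: "u \<noteq> v" using uv E_V E_irr by auto
  define ShA where "ShA = {z. \<forall>q\<in>R v. closed_segment z q \<inter> R u \<noteq> {}}"
  define ShB where "ShB = {z. \<forall>p\<in>R u. closed_segment z p \<inter> R v \<noteq> {}}"
  have cover: "z \<in> ShA \<or> z \<in> ShB" if "z \<in> Oth u v" for z
  proof (rule ccontr)
    assume "\<not> (z \<in> ShA \<or> z \<in> ShB)"
    then obtain q p where "q \<in> R v" "closed_segment z q \<inter> R u = {}" "p \<in> R u" "closed_segment z p \<inter> R v = {}"
      by (auto simp: ShA_def ShB_def)
    then show False using shadow[OF uv notri that] by blast
  qed
  have AB: "R u \<inter> R v = {}" using disj[OF uV vV unv] .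
  have sepl: False if "z \<in> ShA" "z' \<in> ShB" "closed_segment z z' \<inter> R u = {}" "closed_segment z z' \<inter> R v = {}" for z z'
    by (rule sep[OF cpt[OF uV] nonempty[OF uV] cpt[OF vV] nonempty[OF vV] AB])
       (use that in \<open>auto simp: ShA_def ShB_def\<close>)
  define S where "S = {u} \<union> {w \<in> V. w \<noteq> u \<and> w \<noteq> v \<and> (\<exists>z\<in>R w. z \<in> ShA)}"
  have regA: "R w \<subseteq> ShA" if wh: "w \<in> V" "w \<noteq> u" "w \<noteq> v" "w \<in> S" for w
  proof
    fix z' assume z': "z' \<in> R w"
    obtain z where z: "z \<in> R w" "z \<in> ShA" using wh by (auto simp: S_def)
    show "z' \<in> ShA"
    proof (rule ccontr)
      assume "z' \<notin> ShA"
      moreover have "z' \<in> Oth u v" using z' wh by (auto simp: Oth_iff)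
      ultimately have "z' \<in> ShB" using cover by blast
      have seg: "closed_segment z z' \<subseteq> R w" using z(1) z' cvx[OF wh(1)] by (simp add: closed_segment_subset)
      have "closed_segment z z' \<inter> R u = {}" using seg disj[OF uV wh(1)] wh(2) by auto
      moreover have "closed_segment z z' \<inter> R v = {}" using seg disj[OF vV wh(1)] wh(3) by auto
      ultimately show False using sepl z(2) \<open>z' \<in> ShB\<close> by blast
    qed
  qed
  have regB: "R w \<subseteq> ShB" if "w \<in> V" "w \<noteq> u" "w \<noteq> v" "w \<notin> S" for w
  proof
    fix z assume z: "z \<in> R w"
    have "z \<notin> ShA" using that z by (auto simp: S_def)
    moreover have "z \<in> Oth u v" using z that by (auto simp: Oth_iff)
    ultimately show "z \<in> ShB" using cover by blast
  qed
  have clo: "\<forall>x y. delete_edge E u v x y \<and> x \<in> S \<longrightarrow> y \<in> S"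
  proof (intro allI impI, elim conjE)
    fix x y assume d: "delete_edge E u v x y" and xS: "x \<in> S"
    have Exy: "E x y" and ne: "{x, y} \<noteq> {u, v}" using d by (auto simp: delete_edge_def)
    have xV: "x \<in> V" and yV: "y \<in> V" and xy: "x \<noteq> y" using Exy E_V E_irr by auto
    show "y \<in> S"
    proof (rule ccontr)
      assume yS: "y \<notin> S"
      have ynu: "y \<noteq> u" using yS by (auto simp: S_def)
      obtain c d where cd: "c \<in> R x" "d \<in> R y"
        "\<forall>w\<in>V. w \<noteq> x \<and> w \<noteq> y \<longrightarrow> closed_segment c d \<inter> R w = {}"
        using E_sight[OF Exy] by blast
      show False
      proof (cases "x = u")
        case True
        then have ynv: "y \<noteq> v" using ne by auto
        have "d \<in> ShB" using regB[OF yV ynu ynv yS] cd(2) by auto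
        then have "closed_segment d c \<inter> R v \<noteq> {}" using cd(1) True by (auto simp: ShB_def)
        moreover have "closed_segment c d \<inter> R v = {}" using cd(3) vV True unv ynv by auto
        ultimately show False by (simp add: closed_segment_commute)
      next
        case False
        have xnv: "x \<noteq> v" using xS unv by (auto simp: S_def)
        have "c \<in> ShA" using regA[OF xV False xnv xS] cd(1) by auto
        show False
        proof (cases "y = v")
          case True
          have "closed_segment c d \<inter> R u \<noteq> {}" using \<open>c \<in> ShA\<close> cd(2) True by (auto simp: ShA_def)
          moreover have "closed_segment c d \<inter> R u = {}" using cd(3) uV False ynu by auto
          ultimately show False by simp
        next
          case yv: False
          have "d \<in> ShB" using regB[OF yV ynu yv yS] cd(2) by auto
          have "closed_segment c d \<inter> R u = {}" using cd(3) uV False ynu by auto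
          moreover have "closed_segment c d \<inter> R v = {}" using cd(3) vV xnv yv by auto
          ultimately show False using sepl \<open>c \<in> ShA\<close> \<open>d \<in> ShB\<close> by blast
        qed
      qed
    qed
  qed
  show ?thesis by (rule bridge_lemma[OF sg uv _ _ clo]) (use unv in \<open>auto simp: S_def\<close>)
qed

end

theorem theorem1:
  fixes V :: "'v set" and E :: "'v \<Rightarrow> 'v \<Rightarrow> bool"
  assumes "simple_graph V E"
    and "convex_compact_visibility_graph V E"
    and "E u v"
  shows "is_bridge V E u v \<or> in_triangle V E u v"
proof -
  obtain R where rep: "visibility_rep V E R" and cc: "\<forall>v\<in>V. compact (R v) \<and> convex (R v)"
    using assms(2) by (auto simp: convex_compact_visibility_graph_def)
  interpret vis V E R using assms(1) rep cc by unfold_locales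
  show ?thesis
  proof (cases "\<exists>w\<in>V. w \<noteq> u \<and> w \<noteq> v \<and> E u w \<and> E v w")
    case True
    then show ?thesis using assms(3) by (auto simp: in_triangle_def)
  next
    case False
    then show ?thesis using main_bridge[OF assms(3)] by simp
  qed
qed


end
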